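(* If $q$ is an integer with $q\equiv 1\pmod 4$ and $q\neq 1$, then $A_q(q+3,q+1)\le \tfrac12 q^2(q+1)-q=\tfrac12(q-1)q(q+2)$.
   Context: For an integer $q\ge2$ let $[q]=\{0,1,\dots,q-1\}$. For words $u,v\in[q]^n$, the Hamming distance $d_H(u,v)$ is the number of coordinates $i$ with $u_i\neq v_i$. The minimum distance of a code $C\subseteq[q]^n$ is the minimum Hamming distance between distinct codewords ($\infty$ if $|C|\le 1$). $A_q(n,d)$ is the maximum cardinality of a code $C\subseteq[q]^n$ with minimum distance at least $d$. *)

theory Defs
  imports Complex_Main
begin

definition words :: "nat \<Rightarrow> nat \<Rightarrow> nat list set" where
  "words q n = {w. length w = n \<and> (\<forall>i<n. w ! i < q)}"

definition hamming :: "nat list \<Rightarrow> nat list \<Rightarrow> nat" where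
  "hamming u v = card {i. i < length u \<and> u ! i \<noteq> v ! i}"

definition min_dist_ge :: "nat list set \<Rightarrow> nat \<Rightarrow> bool" where
  "min_dist_ge C d = (\<forall>u\<in>C. \<forall>v\<in>C. u \<noteq> v \<longrightarrow> d \<le> hamming u v)"

definition A :: "nat \<Rightarrow> nat \<Rightarrow> nat \<Rightarrow> nat" where
  "A q n d = Max {card C | C. C \<subseteq> words q n \<and> min_dist_ge C d}"

end

theory Submission
  imports Defs
begin


definition agr :: "nat \<Rightarrow> nat list \<Rightarrow> nat list \<Rightarrow> nat" where
  "agr n u v = card {i. i < n \<and> u ! i = v ! i}"
definition cnt :: "nat list set \<Rightarrow> nat \<Rightarrow> nat \<Rightarrow> nat" where
  "cnt T i b = card {u\<in>T. u ! i = b}"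
definition Ep :: "nat \<Rightarrow> nat list set \<Rightarrow> (nat list \<times> nat list) set" where
  "Ep n T = Sigma T (\<lambda>u. {v\<in>T. u \<noteq> v \<and> agr n u v = 1})"

lemma card_filter_sum: "finite T \<Longrightarrow> card {v\<in>T. P v} = (\<Sum>v\<in>T. if P v then 1 else 0)"
proof -
  assume fT: "finite T"
  have "card {v\<in>T. P v} = (\<Sum>v\<in>{v\<in>T. P v}. 1)" by (rule card_eq_sum)
  also have "\<dots> = (\<Sum>v\<in>T. if P v then 1 else 0)" by (rule sum.inter_filter[OF fT])
  finally show ?thesis .
qed

lemma agr_sum: "agr n u v = (\<Sum>i<n. if u!i = v!i then 1 else 0)"
proof -
  have "{i. i < n \<and> u!i = v!i} = {i\<in>{..<n}. u!i = v!i}" by auto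
  then show ?thesis unfolding agr_def using card_filter_sum[of "{..<n}" "\<lambda>i. u!i = v!i"] by simp
qed

lemma sum_fiber:
  fixes f :: "nat \<Rightarrow> 'a::comm_semiring_1"
  assumes "finite T" "\<forall>u\<in>T. u!i < q"
  shows "(\<Sum>u\<in>T. f (u!i)) = (\<Sum>b<q. of_nat (cnt T i b) * f b)"
proof -
  have "(\<Sum>u\<in>T. f (u!i)) = (\<Sum>b<q. \<Sum>u\<in>{x\<in>T. x!i = b}. f (u!i))"
  proof -
    have "(\<lambda>u. u!i) ` T \<subseteq> {..<q}" using assms by auto
    then show ?thesis using assms(1) sum.group[of T "{..<q}" "\<lambda>u. u!i" "\<lambda>u. f (u!i)"] by simp
  qed
  also have "\<dots> = (\<Sum>b<q. of_nat (cnt T i b) * f b)"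
    by (rule sum.cong) (simp_all add: cnt_def)
  finally show ?thesis .
qed

lemma words_lt: "T \<subseteq> words q n \<Longrightarrow> i < n \<Longrightarrow> \<forall>u\<in>T. u!i < q"
  unfolding words_def by auto

lemma col_sum:
  assumes "finite T" "T \<subseteq> words q n" "i < n"
  shows "(\<Sum>b<q. cnt T i b) = card T"
  using sum_fiber[of T i q "\<lambda>_. (1::nat)"] words_lt[OF assms(2,3)] assms(1) by simp

lemma agr_sum_T:
  assumes "finite T"
  shows "(\<Sum>s\<in>T. agr n u s) = (\<Sum>i<n. cnt T i (u!i))"
proof -
  have "(\<Sum>s\<in>T. agr n u s) = (\<Sum>s\<in>T. \<Sum>i<n. if u!i = s!i then 1 else 0)"
    by (simp add: agr_sum)
  also have "\<dots> = (\<Sum>i<n. \<Sum>s\<in>T. if u!i = s!i then 1 else 0)"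
    by (rule sum.swap)
  also have "\<dots> = (\<Sum>i<n. cnt T i (u!i))"
  proof (rule sum.cong)
    fix i
    have "{s\<in>T. s!i = u!i} = {s\<in>T. u!i = s!i}" by auto
    then show "(\<Sum>s\<in>T. if u!i = s!i then 1 else 0) = cnt T i (u!i)"
      using assms by (simp add: cnt_def card_filter_sum)
  qed simp
  finally show ?thesis .
qed

lemma double_sum:
  assumes "finite T" "T \<subseteq> words q n"
  shows "(\<Sum>u\<in>T. \<Sum>v\<in>T. agr n u v) = (\<Sum>i<n. \<Sum>b<q. cnt T i b ^ 2)"
proof -
  have "(\<Sum>u\<in>T. \<Sum>v\<in>T. agr n u v) = (\<Sum>u\<in>T. \<Sum>i<n. cnt T i (u!i))"
    using agr_sum_T[OF assms(1)] by simp
  also have "\<dots> = (\<Sum>i<n. \<Sum>u\<in>T. cnt T i (u!i))"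
    by (rule sum.swap)
  also have "\<dots> = (\<Sum>i<n. \<Sum>b<q. cnt T i b ^ 2)"
  proof (rule sum.cong)
    fix i assume "i \<in> {..<n}"
    then show "(\<Sum>u\<in>T. cnt T i (u!i)) = (\<Sum>b<q. cnt T i b ^ 2)"
      using sum_fiber[of T i q "\<lambda>b. cnt T i b"] words_lt[OF assms(2)] assms(1)
      by (simp add: power2_eq_square)
  qed simp
  finally show ?thesis .
qed

lemma agr_self: "agr n u u = n"
  by (simp add: agr_def)

lemma agr_le: "agr n u v \<le> n"
  unfolding agr_def by (rule order_trans[OF card_mono[of "{..<n}"]]) auto

lemma hamming_agr:
  assumes "length u = n"
  shows "hamming u v = n - agr n u v"
proof -
  have "{i. i < length u \<and> u ! i \<noteq> v ! i} = {..<n} - {i. i < n \<and> u ! i = v ! i}"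
    using assms by auto
  then have "hamming u v = card ({..<n} - {i. i < n \<and> u ! i = v ! i})"
    unfolding hamming_def by simp
  also have "\<dots> = n - agr n u v"
    unfolding agr_def by (subst card_Diff_subset) auto
  finally show ?thesis .
qed



lemma prod_consec_nonneg: "0 \<le> ((x::int) - t) * (x - t - 1)"
proof (cases "x \<le> t")
  case True then show ?thesis by (intro mult_nonpos_nonpos) auto
next
  case False then show ?thesis by (intro mult_nonneg_nonneg) auto
qed

lemma finite_words: "finite (words q n)"
proof -
  have "words q n \<subseteq> {xs. set xs \<subseteq> {..<q} \<and> length xs = n}"
    unfolding words_def by (auto simp: in_set_conv_nth)
  then show ?thesis by (rule finite_subset) (simp add: finite_lists_length_eq)
qed

locale codeq =
  fixes q k :: nat and C :: "nat list set"
  assumes qk: "q = 2*k - 1" and k1: "k \<ge> 1"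
    and Cw: "C \<subseteq> words q (q+3)" and Cd: "min_dist_ge C (q+1)"
begin

lemma finC: "finite C" using finite_subset[OF Cw finite_words] .

lemma agr_le2:
  assumes "u \<in> C" "v \<in> C" "u \<noteq> v"
  shows "agr (q+3) u v \<le> 2"
proof -
  have "length u = q+3" using Cw assms(1) by (auto simp: words_def)
  then have "hamming u v = (q+3) - agr (q+3) u v" by (rule hamming_agr)
  moreover have "q+1 \<le> hamming u v" using Cd assms by (auto simp: min_dist_ge_def)
  ultimately show ?thesis by linarith
qed

definition R :: "nat list set \<Rightarrow> nat \<Rightarrow> int \<Rightarrow> int" where
  "R T j t = (\<Sum>i\<in>{..<q+3}-{j}. \<Sum>b<q. (int (cnt T i b) - t) * (int (cnt T i b) - t - 1))"

lemma R_nonneg: "0 \<le> R T j t"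
  unfolding R_def by (intro sum_nonneg) (rule prod_consec_nonneg)

lemma pair_sum:
  assumes "T \<subseteq> C" "\<forall>u\<in>T. u!j = a" "j < q+3"
  shows "(\<Sum>u\<in>T. \<Sum>v\<in>T. agr (q+3) u v) + card (Ep (q+3) T) = card T * ((q+3) + 2*(card T - 1))"
proof -
  have fT: "finite T" using finite_subset[OF assms(1) finC] .
  have "card (Ep (q+3) T) = (\<Sum>u\<in>T. card {v\<in>T. u \<noteq> v \<and> agr (q+3) u v = 1})"
    unfolding Ep_def using fT by (subst card_SigmaI) auto
  also have "\<dots> = (\<Sum>u\<in>T. \<Sum>v\<in>T. if u \<noteq> v \<and> agr (q+3) u v = 1 then 1 else 0)"
    using fT by (simp add: card_filter_sum)
  finally have E: "card (Ep (q+3) T) = \<dots>" .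
  have pt: "agr (q+3) u v + (if u \<noteq> v \<and> agr (q+3) u v = 1 then 1 else 0) = (if u = v then q+3 else 2)"
    if "u \<in> T" "v \<in> T" for u v
  proof (cases "u = v")
    case True then show ?thesis by (simp add: agr_self)
  next
    case False
    have "agr (q+3) u v \<le> 2" using agr_le2 False that assms(1) by auto
    moreover have "agr (q+3) u v \<noteq> 0"
    proof -
      have "j \<in> {i. i < q+3 \<and> u!i = v!i}" using assms(2,3) that by auto
      then show ?thesis unfolding agr_def by (auto simp: card_eq_0_iff)
    qed
    ultimately show ?thesis using False by auto
  qed
  have row: "(\<Sum>v\<in>T. if u = v then q+3 else 2) = (q+3) + 2*(card T - 1)" if "u \<in> T" for u
  proof -
    have "(\<Sum>v\<in>T. if u = v then q+3 else (2::nat)) = (if u = u then q+3 else 2) + (\<Sum>v\<in>T-{u}. if u = v then q+3 else 2)"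
      using fT that by (rule sum.remove)
    also have "(\<Sum>v\<in>T-{u}. if u = v then q+3 else (2::nat)) = (\<Sum>v\<in>T-{u}. 2)"
      by (rule sum.cong) auto
    finally show ?thesis using fT that by simp
  qed
  have "(\<Sum>u\<in>T. \<Sum>v\<in>T. agr (q+3) u v) + card (Ep (q+3) T)
      = (\<Sum>u\<in>T. \<Sum>v\<in>T. agr (q+3) u v + (if u \<noteq> v \<and> agr (q+3) u v = 1 then 1 else 0))"
    unfolding E by (simp add: sum.distrib)
  also have "\<dots> = (\<Sum>u\<in>T. \<Sum>v\<in>T. if u = v then q+3 else 2)"
    using pt by (intro sum.cong refl) auto
  also have "\<dots> = (\<Sum>u\<in>T. (q+3) + 2*(card T - 1))"
    using row by (intro sum.cong refl) auto
  finally show ?thesis by simp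
qed

end


context codeq begin

lemma key:
  assumes T: "T \<subseteq> C" "\<forall>u\<in>T. u!j = a" "j < q+3" "a < q"
  shows "int (card (Ep (q+3) T)) + R T j t + (int q + 2) * ((2*t+1) * int (card T) - int q * t * (t+1))
         = int (card T)^2 + (int q + 1) * int (card T)"
proof -
  define m where "m = card T"
  have fT: "finite T" using finite_subset[OF T(1) finC] .
  have Tw: "T \<subseteq> words q (q+3)" using T(1) Cw by auto
  have D: "(\<Sum>i<q+3. \<Sum>b<q. cnt T i b ^ 2) + card (Ep (q+3) T) = m * ((q+3) + 2*(m - 1))"
    using pair_sum[OF T(1-3)] double_sum[OF fT Tw] unfolding m_def by simp
  have split: "(\<Sum>i<q+3. \<Sum>b<q. cnt T i b ^ 2) = (\<Sum>b<q. cnt T j b ^ 2) + (\<Sum>i\<in>{..<q+3}-{j}. \<Sum>b<q. cnt T i b ^ 2)"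
    using T(3) by (subst sum.remove[of _ j]) auto
  have colj: "(\<Sum>b<q. cnt T j b ^ 2) = m^2"
  proof -
    have "cnt T j b = (if b = a then m else 0)" for b
    proof -
      have "{u\<in>T. u!j = b} = (if b = a then T else {})" using T(2) by auto
      then show ?thesis unfolding cnt_def m_def by simp
    qed
    then have "(\<Sum>b<q. cnt T j b ^ 2) = (\<Sum>b<q. if b = a then m^2 else 0)"
      by (intro sum.cong) auto
    also have "\<dots> = m^2" using T(4) by simp
    finally show ?thesis .
  qed
  have coli: "int (\<Sum>b<q. cnt T i b ^ 2) = (\<Sum>b<q. (int (cnt T i b) - t) * (int (cnt T i b) - t - 1))
      + ((2*t+1) * int m - int q * t * (t+1))" if "i \<in> {..<q+3}-{j}" for i
  proof -
    have cs: "(\<Sum>b<q. int (cnt T i b)) = int m"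
      using col_sum[OF fT Tw, of i] that unfolding m_def by (simp flip: of_nat_sum)
    have "int (\<Sum>b<q. cnt T i b ^ 2) = (\<Sum>b<q. ((int (cnt T i b) - t) * (int (cnt T i b) - t - 1)
        + ((2*t+1) * int (cnt T i b) - t * (t+1))))"
      by (simp add: of_nat_sum) (intro sum.cong refl, simp add: algebra_simps power2_eq_square)
    also have "\<dots> = (\<Sum>b<q. (int (cnt T i b) - t) * (int (cnt T i b) - t - 1))
        + ((2*t+1) * (\<Sum>b<q. int (cnt T i b)) - int q * (t * (t+1)))"
      by (simp add: sum.distrib sum_subtractf sum_distrib_left)
    finally show ?thesis using cs by (simp add: algebra_simps)
  qed
  have rest: "int (\<Sum>i\<in>{..<q+3}-{j}. \<Sum>b<q. cnt T i b ^ 2) = R T j t + (int q + 2) * ((2*t+1) * int m - int q * t * (t+1))"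
  proof -
    have "int (\<Sum>i\<in>{..<q+3}-{j}. \<Sum>b<q. cnt T i b ^ 2) = (\<Sum>i\<in>{..<q+3}-{j}. int (\<Sum>b<q. cnt T i b ^ 2))"
      by (simp add: of_nat_sum)
    also have "\<dots> = (\<Sum>i\<in>{..<q+3}-{j}. (\<Sum>b<q. (int (cnt T i b) - t) * (int (cnt T i b) - t - 1))
      + ((2*t+1) * int m - int q * t * (t+1)))"
      using coli by (rule sum.cong[OF refl])
    also have "\<dots> = R T j t + int (card ({..<q+3}-{j})) * ((2*t+1) * int m - int q * t * (t+1))"
      unfolding R_def by (simp add: sum.distrib)
    also have "card ({..<q+3}-{j}) = q + 2" using T(3) by simp
    finally show ?thesis by simp
  qed
  have Di: "int (\<Sum>i<q+3. \<Sum>b<q. cnt T i b ^ 2) + int (card (Ep (q+3) T)) = int m * (int q + 3) + 2 * int m * (int m - 1)"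
  proof (cases "m = 0")
    case True then show ?thesis using D by simp
  next
    case False
    then have "int (m * ((q+3) + 2*(m - 1))) = int m * (int q + 3) + 2 * int m * (int m - 1)"
      by (simp add: of_nat_diff algebra_simps)
    then show ?thesis using D by (metis of_nat_add)
  qed
  show ?thesis using Di unfolding split of_nat_add colj rest m_def[symmetric]
    by (simp add: algebra_simps power2_eq_square)
qed

end


context codeq begin

definition S :: "nat \<Rightarrow> nat \<Rightarrow> nat list set" where
  "S j a = {u\<in>C. u!j = a}"

lemma card_S: "card (S j a) = cnt C j a" by (simp add: S_def cnt_def)

lemma qint: "int q = 2 * int k - 1" using qk k1 by simp

lemma no_big:
  assumes T: "T \<subseteq> C" "\<forall>u\<in>T. u!j = a" "j < q+3" "a < q" and c: "card T = q*k + 1"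
  shows False
proof -
  have K: "int (card (Ep (q+3) T)) + R T j (int k) + (int q + 2) * ((2*int k+1) * int (card T) - int q * int k * (int k+1))
         = int (card T)^2 + (int q + 1) * int (card T)" by (rule key[OF T])
  have ct: "int (card T) = int q * int k + 1" using c by simp
  have "int (card T)^2 + (int q + 1) * int (card T) - (int q + 2) * ((2*int k+1) * int (card T) - int q * int k * (int k+1)) = - 4 * int k"
    unfolding ct qint by (simp add: algebra_simps power2_eq_square)
  then have "int (card (Ep (q+3) T)) + R T j (int k) = - 4 * int k" using K by linarith
  moreover have "0 \<le> R T j (int k)" by (rule R_nonneg)
  ultimately show False using k1 by linarith
qed

lemma S_le:
  assumes "j < q+3" "a < q"
  shows "cnt C j a \<le> q*k"
proof (rule ccontr)
  assume "\<not> ?thesis"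
  then have "q*k+1 \<le> card (S j a)" by (simp add: card_S)
  then obtain T where "T \<subseteq> S j a" "card T = q*k+1" by (rule obtain_subset_with_card_n)
  then show False using no_big[of T j a] assms by (auto simp: S_def)
qed

lemma S_sub: "S j a \<subseteq> C" "\<forall>u\<in>S j a. u!j = a" by (auto simp: S_def)

lemma deficit:
  assumes "j < q+3" "a < q"
  shows "int (card (Ep (q+3) (S j a))) \<le> (int (q*k) - int (cnt C j a)) * (int (q*k) - int (cnt C j a) - 1)"
proof -
  have K: "int (card (Ep (q+3) (S j a))) + R (S j a) j (int k - 1) + (int q + 2) * ((2*(int k - 1)+1) * int (card (S j a)) - int q * (int k - 1) * ((int k - 1)+1))
         = int (card (S j a))^2 + (int q + 1) * int (card (S j a))" by (rule key[OF S_sub assms])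
  have "int (cnt C j a)^2 + (int q + 1) * int (cnt C j a) - (int q + 2) * ((2*(int k - 1)+1) * int (cnt C j a) - int q * (int k - 1) * ((int k - 1)+1))
     = (int (q*k) - int (cnt C j a)) * (int (q*k) - int (cnt C j a) - 1)"
    unfolding of_nat_mult qint by (simp add: algebra_simps power2_eq_square)
  moreover have "0 \<le> R (S j a) j (int k - 1)" by (rule R_nonneg)
  ultimately show ?thesis using K unfolding card_S by linarith
qed

lemma perfect:
  assumes "j < q+3" "a < q" "cnt C j a = q*k" "i < q+3" "i \<noteq> j" "b < q"
  shows "cnt (S j a) i b = k"
proof -
  have K: "int (card (Ep (q+3) (S j a))) + R (S j a) j (int k) + (int q + 2) * ((2*int k+1) * int (card (S j a)) - int q * int k * (int k+1))
         = int (card (S j a))^2 + (int q + 1) * int (card (S j a))" by (rule key[OF S_sub assms(1,2)])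
  have ct: "int (card (S j a)) = int q * int k" using assms(3) card_S by simp
  have "int (card (S j a))^2 + (int q + 1) * int (card (S j a)) - (int q + 2) * ((2*int k+1) * int (card (S j a)) - int q * int k * (int k+1)) = 0"
    unfolding ct qint by (simp add: algebra_simps power2_eq_square)
  then have "R (S j a) j (int k) = 0" using K R_nonneg[of "S j a" j "int k"] by linarith
  then have Z: "\<forall>i\<in>{..<q+3}-{j}. (\<Sum>b<q. (int (cnt (S j a) i b) - int k) * (int (cnt (S j a) i b) - int k - 1)) = 0"
    unfolding R_def
    by (subst (asm) sum_nonneg_eq_0_iff) (auto intro!: sum_nonneg prod_consec_nonneg)
  have "\<forall>b\<in>{..<q}. (int (cnt (S j a) i b) - int k) * (int (cnt (S j a) i b) - int k - 1) = 0"
    using Z assms(4,5)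
    by (subst sum_nonneg_eq_0_iff[symmetric]) (auto intro!: prod_consec_nonneg)
  then have ge: "\<forall>b<q. k \<le> cnt (S j a) i b" by auto
  have fS: "finite (S j a)" using finite_subset[OF S_sub(1) finC] .
  have Sw: "S j a \<subseteq> words q (q+3)" using S_sub(1) Cw by auto
  have "(\<Sum>b<q. cnt (S j a) i b - k) = (\<Sum>b<q. cnt (S j a) i b) - (\<Sum>b<q. k)"
    using ge by (intro sum_subtractf_nat) auto
  also have "\<dots> = 0" using col_sum[OF fS Sw assms(4)] assms(3) card_S by simp
  finally have "\<forall>b\<in>{..<q}. cnt (S j a) i b - k = 0" by simp
  then show ?thesis using ge assms(6) by (metis diff_is_0_eq le_antisym lessThan_iff)
qed

end


lemma agr_sym: "agr n u v = agr n v u"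
  unfolding agr_def by (metis)

context codeq begin

lemma Ep_fin: "T \<subseteq> C \<Longrightarrow> finite (Ep (q+3) T)"
  by (rule finite_subset[of _ "C \<times> C"]) (auto simp: Ep_def finC)

lemma witness:
  assumes "odd k" "a < q" "cnt C 0 a = q*k" "c \<in> C" "c \<notin> S 0 a"
  shows "\<exists>s\<in>S 0 a. agr (q+3) c s = 1"
proof (rule ccontr)
  assume H: "\<not> ?thesis"
  have fS: "finite (S 0 a)" using finite_subset[OF S_sub(1) finC] .
  have c0: "c!0 \<noteq> a" using assms(4,5) by (auto simp: S_def)
  have clt: "\<forall>i<q+3. c!i < q" using assms(4) Cw by (auto simp: words_def)
  have "(\<Sum>s\<in>S 0 a. agr (q+3) c s) = (\<Sum>i<q+3. cnt (S 0 a) i (c!i))"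
    by (rule agr_sum_T[OF fS])
  also have "\<dots> = cnt (S 0 a) 0 (c!0) + (\<Sum>i\<in>{..<q+3}-{0}. cnt (S 0 a) i (c!i))"
    by (subst sum.remove[of _ 0]) auto
  also have "cnt (S 0 a) 0 (c!0) = 0"
  proof -
    have "{u\<in>S 0 a. u!0 = c!0} = {}" using c0 by (auto simp: S_def)
    then show ?thesis unfolding cnt_def by (metis card.empty)
  qed
  also have "(\<Sum>i\<in>{..<q+3}-{0}. cnt (S 0 a) i (c!i)) = (\<Sum>i\<in>{..<q+3}-{0}. k)"
    using perfect[of 0 a] assms(2,3) clt by (intro sum.cong) auto
  finally have sumv: "(\<Sum>s\<in>S 0 a. agr (q+3) c s) = (q+2)*k" by simp
  have "odd ((q+2)*k)" using assms(1) qk k1 by auto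
  moreover have "even (\<Sum>s\<in>S 0 a. agr (q+3) c s)"
  proof (rule dvd_sum)
    fix s assume s: "s \<in> S 0 a"
    then have "s \<noteq> c" using assms(5) by auto
    moreover have "s \<in> C" using s S_sub(1) by auto
    ultimately have "agr (q+3) c s \<le> 2" using agr_le2 assms(4) by auto
    moreover have "agr (q+3) c s \<noteq> 1" using H s by auto
    ultimately have "agr (q+3) c s = 0 \<or> agr (q+3) c s = 2" by auto
    then show "2 dvd agr (q+3) c s" by auto
  qed
  ultimately show False using sumv by metis
qed

end


lemma gen_contra: fixes aa bb cc dd x :: int shows "aa \<le> bb \<Longrightarrow> bb \<le> cc \<Longrightarrow> dd \<le> aa \<Longrightarrow> dd - cc = 4*(x-1) \<Longrightarrow> 5 \<le> x \<Longrightarrow> False"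
  by arith

context codeq begin

lemma colC: "i < q+3 \<Longrightarrow> (\<Sum>b<q. cnt C i b) = card C"
  using col_sum[OF finC Cw] .

lemma sq_bound:
  fixes d :: "nat \<Rightarrow> int"
  assumes "\<forall>b<q. 0 \<le> d b" "(\<Sum>b<q. d b) = s"
  shows "(\<Sum>b<q. d b * (d b - 1)) \<le> s * (s - 1)"
proof -
  have le: "\<forall>b<q. d b \<le> s"
  proof (intro allI impI)
    fix b assume b: "b < q"
    have "d b \<le> (\<Sum>c<q. d c)"
      by (rule member_le_sum) (use assms(1) b in auto)
    then show "d b \<le> s" using assms(2) by simp
  qed
  have "(\<Sum>b<q. d b * (d b - 1)) = (\<Sum>b<q. d b * d b) - s"
    using assms(2) by (simp add: algebra_simps sum_subtractf)
  also have "(\<Sum>b<q. d b * d b) \<le> (\<Sum>b<q. d b * s)"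
    using assms(1) le by (intro sum_mono mult_left_mono) auto
  also have "(\<Sum>b<q. d b * s) = (\<Sum>b<q. d b) * s" by (simp add: sum_distrib_right)
  also have "\<dots> = s * s" using assms(2) by simp
  finally show ?thesis by (simp add: algebra_simps)
qed

lemma main_bound:
  assumes ok: "odd k" "k \<ge> 3"
  shows "card C \<le> q*q*k - q"
proof (rule ccontr)
  assume H: "\<not> ?thesis"
  define M where "M = card C"
  have qpos: "q \<ge> 5" using qk ok by auto
  have Sle: "cnt C i b \<le> q*k" if "i < q+3" "b < q" for i b using S_le that by auto
  have Mle: "M \<le> q*(q*k)"
  proof -
    have "M = (\<Sum>b<q. cnt C 0 b)" using colC[of 0] M_def by simp
    also have "\<dots> \<le> (\<Sum>b<q. q*k)" using Sle by (intro sum_mono) auto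
    finally show ?thesis by simp
  qed
  define s where "s = q*(q*k) - M"
  have slt: "s < q" using H Mle unfolding s_def M_def by (simp add: algebra_simps)
  have defsum: "(\<Sum>b<q. q*k - cnt C i b) = s" if "i < q+3" for i
  proof -
    have "(\<Sum>b<q. q*k - cnt C i b) = (\<Sum>b<q. q*k) - (\<Sum>b<q. cnt C i b)"
      using Sle that by (intro sum_subtractf_nat) auto
    then show ?thesis using colC[OF that] unfolding s_def M_def by simp
  qed
  obtain a where a: "a < q" "cnt C 0 a = q*k"
  proof (rule ccontr)
    assume nt: "\<not> thesis"
    have "\<forall>b<q. 1 \<le> q*k - cnt C 0 b"
    proof (intro allI impI)
      fix b assume b: "b < q"
      then have "cnt C 0 b \<noteq> q*k" using that nt by blast
      moreover have "cnt C 0 b \<le> q*k" using Sle b by simp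
      ultimately show "1 \<le> q*k - cnt C 0 b" by simp
    qed
    then have "(\<Sum>b<q. (1::nat)) \<le> (\<Sum>b<q. q*k - cnt C 0 b)" by (intro sum_mono) auto
    then show False using defsum[of 0] slt by simp
  qed
  define D where "D = C - S 0 a"
  have cardD: "card D = M - q*k"
  proof -
    have "card (C - S 0 a) = card C - card (S 0 a)"
      by (rule card_Diff_subset[OF finite_subset[OF S_sub(1) finC] S_sub(1)])
    then show ?thesis unfolding D_def M_def using a(2) card_S by simp
  qed
  define sel where "sel c = (SOME s. s \<in> S 0 a \<and> agr (q+3) c s = 1)" for c
  have sel: "sel c \<in> S 0 a \<and> agr (q+3) c (sel c) = 1" if "c \<in> D" for c
    unfolding sel_def
    by (rule someI_ex) (use witness[OF ok(1) a] that in \<open>auto simp: D_def\<close>)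
  define W where "W = Ep (q+3) C"
  have fW: "finite W" unfolding W_def by (rule Ep_fin) simp
  have sub1: "(\<lambda>c. (c, sel c)) ` D \<union> (\<lambda>c. (sel c, c)) ` D \<subseteq> W"
  proof -
    have "(c, sel c) \<in> W \<and> (sel c, c) \<in> W" if "c \<in> D" for c
    proof -
      have "sel c \<in> C" "c \<in> C" "c \<noteq> sel c" using sel[OF that] that S_sub(1) by (auto simp: D_def)
      then show ?thesis using sel[OF that] agr_sym[of "q+3" c "sel c"] by (auto simp: W_def Ep_def)
    qed
    then show ?thesis by auto
  qed
  have disj: "(\<lambda>c. (c, sel c)) ` D \<inter> (\<lambda>c. (sel c, c)) ` D = {}"
    using sel by (auto simp: D_def)
  have fD: "finite D" unfolding D_def using finC by simp
  have "card ((\<lambda>c. (c, sel c)) ` D \<union> (\<lambda>c. (sel c, c)) ` D) = 2 * card D"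
    using disj fD by (subst card_Un_disjoint) (auto simp: card_image inj_on_def)
  then have lowW: "2 * card D \<le> card W" using card_mono[OF fW sub1] by simp
  have sub2: "W \<subseteq> (\<Union>i<q+3. \<Union>b<q. Ep (q+3) (S i b))"
  proof
    fix p assume p: "p \<in> W"
    obtain u v where uv: "p = (u,v)" by fastforce
    have u: "u \<in> C" "v \<in> C" "u \<noteq> v" "agr (q+3) u v = 1" using p uv by (auto simp: W_def Ep_def)
    then have "{i. i < q+3 \<and> u!i = v!i} \<noteq> {}" unfolding agr_def by (metis card.empty zero_neq_one)
    then obtain i where i: "i < q+3" "u!i = v!i" by auto
    have ult: "u!i < q" using u(1) i(1) Cw by (auto simp: words_def)
    have "p \<in> Ep (q+3) (S i (u!i))" using i u uv by (auto simp: Ep_def S_def)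
    then show "p \<in> (\<Union>i<q+3. \<Union>b<q. Ep (q+3) (S i b))"
      using i(1) ult by blast
  qed
  have "card W \<le> (\<Sum>i<q+3. card (\<Union>b<q. Ep (q+3) (S i b)))"
    by (rule order_trans[OF card_mono[OF _ sub2] card_UN_le]) (auto intro: Ep_fin[OF S_sub(1)])
  also have "\<dots> \<le> (\<Sum>i<q+3. \<Sum>b<q. card (Ep (q+3) (S i b)))"
    by (intro sum_mono card_UN_le) auto
  finally have upW: "int (card W) \<le> (\<Sum>i<q+3. \<Sum>b<q. int (card (Ep (q+3) (S i b))))"
    by (simp flip: of_nat_sum)
  have col: "(\<Sum>b<q. int (card (Ep (q+3) (S i b)))) \<le> int s * (int s - 1)" if i: "i < q+3" for i
  proof -
    define d where "d b = int (q*k) - int (cnt C i b)" for b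
    have "(\<Sum>b<q. int (card (Ep (q+3) (S i b)))) \<le> (\<Sum>b<q. d b * (d b - 1))"
      unfolding d_def using deficit i by (intro sum_mono) auto
    also have "\<dots> \<le> int s * (int s - 1)"
    proof (rule sq_bound)
      show "\<forall>b<q. 0 \<le> d b"
      proof (intro allI impI)
        fix b assume "b < q"
        then have "cnt C i b \<le> q*k" using Sle i by simp
        then have "int (cnt C i b) \<le> int (q*k)" by (simp only: of_nat_le_iff)
        then show "0 \<le> d b" by (simp add: d_def)
      qed
      have "(\<Sum>b<q. d b) = int (\<Sum>b<q. q*k - cnt C i b)"
        using Sle i by (simp add: d_def of_nat_sum of_nat_diff)
      then show "(\<Sum>b<q. d b) = int s" using defsum[OF i] by simp
    qed
    finally show ?thesis .
  qed
  have cW: "int (card W) \<le> (\<Sum>i<q+3. int s * (int s - 1))"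
    using upW col by (meson order_trans sum_mono lessThan_iff)
  have fin: "2 * (int M - int q * int k) \<le> (int q + 3) * (int s * (int s - 1))"
  proof -
    have MqK: "q*k \<le> M" using card_mono[OF finC S_sub(1), of 0 a] card_S a(2) M_def by simp
    have "int (2*(M - q*k)) \<le> int (card W)" using lowW cardD by simp
    moreover have "int (2*(M - q*k)) = 2 * (int M - int q * int k)" using MqK by (simp add: of_nat_diff)
    ultimately show ?thesis using cW by simp
  qed
  have Ms: "int M = int q * int q * int k - int s" using Mle unfolding s_def by (simp add: of_nat_diff)
  have s1: "int s * (int s - 1) \<le> (int q - 1) * (int q - 2)"
  proof (cases "s = 0")
    case True then show ?thesis using qpos by simp
  next
    case False
    then show ?thesis using slt by (intro mult_mono) auto
  qed
  have s2: "(int q + 3) * (int s * (int s - 1)) \<le> (int q + 3) * ((int q - 1) * (int q - 2))"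
    using s1 by (intro mult_left_mono) auto
  have s3: "2 * (int q * int q * int k - int q * int k - (int q - 1)) \<le> 2 * (int M - int q * int k)"
    using Ms slt by simp
  have eq: "2 * (int q * int q * int k - int q * int k - (int q - 1)) - (int q + 3) * ((int q - 1) * (int q - 2))
      = 4 * (int q - 1)"
    unfolding qint by (simp add: algebra_simps)
  have q5: "(5::int) \<le> int q" using qpos by simp
  show False by (rule gen_contra[OF fin s2 s3 eq q5])
qed

end


theorem corollary5p4:
  fixes q :: nat
  assumes "q mod 4 = 1" and "q \<noteq> 1"
  shows "real (A q (q + 3) (q + 1)) \<le> (1/2) * real q ^ 2 * (real q + 1) - real q"
proof -
  define t where "t = q div 4"
  have qt: "q = 4*t + 1" using assms(1) unfolding t_def by presburger
  have t1: "t \<ge> 1" using qt assms(2) by (cases t) auto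
  define k where "k = 2*t + 1"
  have kk: "q = 2*k - 1" "k \<ge> 1" "odd k" "k \<ge> 3" using qt t1 unfolding k_def by auto
  define X where "X = {card C | C. C \<subseteq> words q (q + 3) \<and> min_dist_ge C (q + 1)}"
  have bnd: "x \<le> q*q*k - q" if xX: "x \<in> X" for x
  proof -
    obtain C where C: "x = card C" "C \<subseteq> words q (q + 3)" "min_dist_ge C (q + 1)"
      using xX unfolding X_def by blast
    interpret codeq q k C using kk(1,2) C(2,3) by unfold_locales
    show ?thesis using main_bound[OF kk(3,4)] C(1) by simp
  qed
  have fX: "finite X" by (rule finite_subset[of _ "{..q*q*k - q}"]) (use bnd in auto)
  have neX: "X \<noteq> {}"
  proof -
    have "card {} \<in> X" unfolding X_def
      by (rule CollectI, rule exI[of _ "{}"]) (simp add: min_dist_ge_def)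
    then show ?thesis by auto
  qed
  have "A q (q + 3) (q + 1) \<le> q*q*k - q"
    unfolding A_def X_def[symmetric] using fX neX bnd by simp
  then have "real (A q (q + 3) (q + 1)) \<le> real (q*q*k - q)" by simp
  also have "real (q*q*k - q) = real q * real q * real k - real q"
  proof -
    have "q \<le> q*q*k" using kk by simp
    then show ?thesis by (simp add: of_nat_diff)
  qed
  also have "\<dots> = (1/2) * real q ^ 2 * (real q + 1) - real q"
  proof -
    have "real q + 1 = 2 * real k" using qt unfolding k_def by simp
    then show ?thesis by (simp add: power2_eq_square)
  qed
  finally show ?thesis .
qed


end
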